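(* Let $\{|0\rangle,|1\rangle,|2\rangle\}$ be the standard basis of $\mathbb C^3$ and consider the seven product states in $\mathbb C^3\otimes\mathbb C^3$: $|\psi_1\rangle=|0\rangle\otimes|0\rangle$, $|\psi_2\rangle=(|1\rangle+|2\rangle)\otimes|0\rangle$, $|\psi_3\rangle=(|1\rangle-|2\rangle)\otimes|0\rangle$, $|\psi_4\rangle=|0\rangle\otimes(|1\rangle+|2\rangle)$, $|\psi_5\rangle=|0\rangle\otimes(|1\rangle-|2\rangle)$, $|\psi_6\rangle=|1\rangle\otimes|1\rangle$, $|\psi_7\rangle=|2\rangle\otimes|2\rangle$. These states are perfectly distinguishable by one-way LOCC with Alice measuring first and by one-way LOCC with Bob measuring first, but they are not perfectly distinguishable by a product measurement.
   Context: One-way LOCC with Alice first: there exist positive semidefinite $Q_1,\dots,Q_N$ on $\mathcal H_A$ with $\sum_jQ_j=I$ and, for each $j$, positive semidefinite $R^{(j)}_1,\dots,R^{(j)}_r$ on $\mathcal H_B$ with $\sum_kR^{(j)}_k=I$, such that $\langle\psi_l|Q_j\otimes R^{(j)}_k|\psi_l\rangle=0$ for all $j$ and $k\ne l$; with Bob first, the same with the roles of the two factors exchanged. Perfect distinguishability by a product measurement: there exist positive semidefinite $A_1,\dots,A_p$ on $\mathcal H_A$ summing to $I$ and $B_1,\dots,B_q$ on $\mathcal H_B$ summing to $I$ such that for every pair $(a,b)$ at most one index $k$ satisfies $\langle\psi_k|A_a\otimes B_b|\psi_k\rangle\ne0$. Here $\mathcal H_A=\mathcal H_B=\mathbb C^3$,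 the first tensor factor being Alice's. *)

theory Defs
  imports "HOL-Analysis.Analysis"
begin

text \<open>Vectors in C^n are complex^'n, operators are complex^'n^'n (row index first).
  The bipartite space H_A (x) H_B is complex^('a \<times> 'b), first factor Alice's.\<close>

definition tensor_vec :: "complex^'a \<Rightarrow> complex^'b \<Rightarrow> complex^('a::finite \<times> 'b::finite)" where
  "tensor_vec u v = (\<chi> p. u $ fst p * v $ snd p)"

definition tensor_mat :: "complex^'a^'a \<Rightarrow> complex^'b^'b \<Rightarrow> complex^('a::finite \<times> 'b::finite)^('a \<times> 'b)" where
  "tensor_mat A B = (\<chi> p q. A $ fst p $ fst q * B $ snd p $ snd q)"

definition expect :: "complex^'n::finite \<Rightarrow> complex^'n^'n \<Rightarrow> complex" where
  "expect x M = (\<Sum>i\<in>UNIV. \<Sum>j\<in>UNIV. cnj (x $ i) * M $ i $ j * x $ j)"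

definition psd :: "complex^'n::finite^'n \<Rightarrow> bool" where
  "psd M \<longleftrightarrow> (\<forall>x. Im (expect x M) = 0 \<and> Re (expect x M) \<ge> 0)"

definition povm :: "nat \<Rightarrow> (nat \<Rightarrow> complex^'n::finite^'n) \<Rightarrow> bool" where
  "povm N E \<longleftrightarrow> (\<forall>j\<in>{1..N}. psd (E j)) \<and> (\<Sum>j=1..N. E j) = mat 1"

text \<open>One-way LOCC, Alice first, for states psi 1..r (Bob's outcome k identifies state k).\<close>
definition oneway_A_first ::
  "(nat \<Rightarrow> complex^('a::finite \<times> 'b::finite)) \<Rightarrow> nat \<Rightarrow> bool" where
  "oneway_A_first psi r \<longleftrightarrow>
     (\<exists>N (Q :: nat \<Rightarrow> complex^'a^'a) (R :: nat \<Rightarrow> nat \<Rightarrow> complex^'b^'b).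
        povm N Q \<and> (\<forall>j\<in>{1..N}. povm r (R j)) \<and>
        (\<forall>j\<in>{1..N}. \<forall>k\<in>{1..r}. \<forall>l\<in>{1..r}. k \<noteq> l \<longrightarrow>
            expect (psi l) (tensor_mat (Q j) (R j k)) = 0))"

definition oneway_B_first ::
  "(nat \<Rightarrow> complex^('a::finite \<times> 'b::finite)) \<Rightarrow> nat \<Rightarrow> bool" where
  "oneway_B_first psi r \<longleftrightarrow>
     (\<exists>N (Q :: nat \<Rightarrow> complex^'b^'b) (R :: nat \<Rightarrow> nat \<Rightarrow> complex^'a^'a).
        povm N Q \<and> (\<forall>j\<in>{1..N}. povm r (R j)) \<and>
        (\<forall>j\<in>{1..N}. \<forall>k\<in>{1..r}. \<forall>l\<in>{1..r}. k \<noteq> l \<longrightarrow>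
            expect (psi l) (tensor_mat (R j k) (Q j)) = 0))"

definition product_distinguishable ::
  "(nat \<Rightarrow> complex^('a::finite \<times> 'b::finite)) \<Rightarrow> nat \<Rightarrow> bool" where
  "product_distinguishable psi r \<longleftrightarrow>
     (\<exists>p q (A :: nat \<Rightarrow> complex^'a^'a) (B :: nat \<Rightarrow> complex^'b^'b).
        povm p A \<and> povm q B \<and>
        (\<forall>a\<in>{1..p}. \<forall>b\<in>{1..q}.
           card {k\<in>{1..r}. expect (psi k) (tensor_mat (A a) (B b)) \<noteq> 0} \<le> 1))"

definition ket :: "3 \<Rightarrow> complex^3" where
  "ket i = axis i 1"

definition psi7 :: "nat \<Rightarrow> complex^(3 \<times> 3)" where
  "psi7 n = (if n = 1 then tensor_vec (ket 0) (ket 0)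
    else if n = 2 then tensor_vec (ket 1 + ket 2) (ket 0)
    else if n = 3 then tensor_vec (ket 1 - ket 2) (ket 0)
    else if n = 4 then tensor_vec (ket 0) (ket 1 + ket 2)
    else if n = 5 then tensor_vec (ket 0) (ket 1 - ket 2)
    else if n = 6 then tensor_vec (ket 1) (ket 1)
    else if n = 7 then tensor_vec (ket 2) (ket 2)
    else 0)"

end

theory Submission
  imports Defs
begin
lemma ex3: fixes x :: 3 shows "x = 0 \<or> x = 1 \<or> x = 2"
proof (induct x)
  case (of_int z)
  then have "z = 0 \<or> z = 1 \<or> z = 2" by fastforce
  then show ?case by (elim disjE) simp_all
qed
lemma UNIV3: "(UNIV::3 set) = {0,1,2}"
  by (rule UNIV_eq_I) (use ex3 in simp)
lemma neq3: "(0::3) \<noteq> 1" "(0::3) \<noteq> 2" "(1::3) \<noteq> 2" by simp_all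
lemma sum3: "sum f (UNIV::3 set) = f 0 + f 1 + f 2"
  unfolding UNIV3 using neq3 by (simp add: add.assoc)
lemma all3: "(\<forall>i::3. P i) = (P 0 \<and> P 1 \<and> P 2)"
proof (intro iffI allI)
  fix i :: 3 assume "P 0 \<and> P 1 \<and> P 2" then show "P i" using ex3[of i] by auto
qed auto
lemma sum_pair_univ: "(\<Sum>p\<in>(UNIV::('a::finite\<times>'b::finite) set). f p) = (\<Sum>i\<in>UNIV. \<Sum>j\<in>UNIV. f (i,j))"
  by (simp add: sum.cartesian_product UNIV_Times_UNIV[symmetric] del: UNIV_Times_UNIV)

lemma expect_tensor: "expect (tensor_vec u v) (tensor_mat A B) = expect u A * expect v B"
proof -
  let ?X = "\<lambda>i1 j1. cnj (u $ i1) * A $ i1 $ j1 * u $ j1"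
  let ?Y = "\<lambda>i2 j2. cnj (v $ i2) * B $ i2 $ j2 * v $ j2"
  have "expect (tensor_vec u v) (tensor_mat A B) =
     (\<Sum>p\<in>UNIV. \<Sum>q\<in>UNIV. ?X (fst p) (fst q) * ?Y (snd p) (snd q))"
    unfolding expect_def tensor_vec_def tensor_mat_def by (simp add: algebra_simps)
  also have "\<dots> = (\<Sum>i1\<in>UNIV. \<Sum>i2\<in>UNIV. \<Sum>j1\<in>UNIV. \<Sum>j2\<in>UNIV. ?X i1 j1 * ?Y i2 j2)"
    by (simp only: sum_pair_univ fst_conv snd_conv)
  also have "\<dots> = (\<Sum>i1\<in>UNIV. \<Sum>j1\<in>UNIV. ?X i1 j1) * (\<Sum>i2\<in>UNIV. \<Sum>j2\<in>UNIV. ?Y i2 j2)"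
    by (simp only: sum_product)
  also have "\<dots> = expect u A * expect v B"
    unfolding expect_def ..
  finally show ?thesis .
qed

definition projc :: "real \<Rightarrow> complex^3 \<Rightarrow> complex^3^3" where
  "projc c v = (\<chi> i j. of_real c * v$i * cnj (v$j))"

lemma expect_projc: "expect x (projc c v) = of_real c * of_real ((cmod (\<Sum>j\<in>UNIV. cnj (v$j) * x$j))^2)"
proof -
  let ?w = "\<Sum>j\<in>UNIV. cnj (v$j) * x$j"
  have "expect x (projc c v) = of_real c * (cnj ?w * ?w)"
    unfolding expect_def projc_def
    apply (simp add: sum_distrib_left sum_distrib_right algebra_simps)
    by (rule sum.swap)
  also have "cnj w * w = of_real ((cmod w)^2)" for w
    by (simp only: complex_norm_square mult.commute)
  finally show ?thesis by simp
qed

lemma psd_projc: "c \<ge> 0 \<Longrightarrow> psd (projc c v)"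
  unfolding psd_def expect_projc by simp

lemma expect_zero[simp]: "expect x 0 = 0"
  unfolding expect_def by simp

lemma psd_zero: "psd 0" unfolding psd_def by simp

lemma expect_sum: "finite S \<Longrightarrow> expect x (\<Sum>j\<in>S. M j) = (\<Sum>j\<in>S. expect x (M j))"
proof -
  have "expect x (\<Sum>j\<in>S. M j) = (\<Sum>i\<in>UNIV. \<Sum>k\<in>UNIV. \<Sum>j\<in>S. cnj (x$i) * M j $ i $ k * x$k)"
    unfolding expect_def by (simp add: sum_distrib_left sum_distrib_right)
  also have "\<dots> = (\<Sum>i\<in>UNIV. \<Sum>j\<in>S. \<Sum>k\<in>UNIV. cnj (x$i) * M j $ i $ k * x$k)"
    by (rule sum.cong[OF refl], rule sum.swap)
  also have "\<dots> = (\<Sum>j\<in>S. \<Sum>i\<in>UNIV. \<Sum>k\<in>UNIV. cnj (x$i) * M j $ i $ k * x$k)"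
    by (rule sum.swap)
  finally show ?thesis unfolding expect_def .
qed

lemma expect_id: fixes x :: "complex^'n::finite" shows "expect x (mat 1) = (\<Sum>i\<in>UNIV. cnj (x$i) * x$i)"
proof -
  have "(\<Sum>j\<in>UNIV. cnj (x$i) * (mat 1 :: complex^'n^'n) $ i $ j * x$j) = cnj (x$i) * x$i" for i :: 'n
  proof -
    have "(\<Sum>j\<in>UNIV. cnj (x$i) * (mat 1 :: complex^'n^'n) $ i $ j * x$j) = (\<Sum>j\<in>UNIV. if i = j then cnj (x$i) * x$j else 0)"
      by (rule sum.cong) (auto simp: mat_def)
    also have "\<dots> = cnj (x$i) * x$i" by (subst sum.delta') auto
    finally show ?thesis .
  qed
  then show ?thesis unfolding expect_def by simp
qed

lemma ket_comp[simp]: "ket i $ j = (if j = i then 1 else 0)" unfolding ket_def axis_def by simp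


lemma ball13: "(\<forall>j\<in>{1..3::nat}. P j) = (P 1 \<and> P 2 \<and> P 3)"
proof -
  have "{1..3::nat} = {1,2,3}" by auto
  then show ?thesis by simp
qed

lemma ball17: "(\<forall>j\<in>{1..7::nat}. P j) = (P 1 \<and> P 2 \<and> P 3 \<and> P 4 \<and> P 5 \<and> P 6 \<and> P 7)"
proof -
  have "{1..7::nat} = {1,2,3,4,5,6,7}" by auto
  then show ?thesis by simp
qed

lemma sum13: "(\<Sum>j=1..3::nat. f j) = f 1 + f 2 + f 3"
proof -
  have "{1..3::nat} = {1,2,3}" by auto
  then show ?thesis by (simp add: add.assoc)
qed

lemma sum17: "(\<Sum>j=1..7::nat. f j) = f 1 + f 2 + f 3 + f 4 + f 5 + f 6 + f 7"
proof -
  have "{1..7::nat} = {1,2,3,4,5,6,7}" by auto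
  then show ?thesis by (simp add: add.assoc)
qed

definition "P0 = projc 1 (ket 0)"
definition "Pp = projc (1/2) (ket 1 + ket 2)"
definition "Pm = projc (1/2) (ket 1 - ket 2)"
definition "P1 = projc 1 (ket 1)"
definition "P2 = projc 1 (ket 2)"

lemma P_psd: "psd P0" "psd Pp" "psd Pm" "psd P1" "psd P2"
  unfolding P0_def Pp_def Pm_def P1_def P2_def by (simp_all add: psd_projc)

lemma sumA: "P0 + Pp + Pm = mat 1"
  unfolding P0_def Pp_def Pm_def projc_def mat_def vec_eq_iff
  using neq3 by (simp add: all3)

lemma sumB: "P0 + P1 + P2 = mat 1"
  unfolding P0_def P1_def P2_def projc_def mat_def vec_eq_iff
  using neq3 by (simp add: all3)


definition QA :: "nat \<Rightarrow> complex^3^3" where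
  "QA j = (if j = 1 then P0 else if j = 2 then Pp else if j = 3 then Pm else 0)"

definition RA :: "nat \<Rightarrow> nat \<Rightarrow> complex^3^3" where
  "RA j k = (if j = 1 then (if k = 1 then P0 else if k = 4 then Pp else if k = 5 then Pm else 0)
     else if j = 2 then (if k = 2 then P0 else if k = 6 then P1 else if k = 7 then P2 else 0)
     else (if k = 3 then P0 else if k = 6 then P1 else if k = 7 then P2 else 0))"

definition av :: "nat \<Rightarrow> complex^3" where
  "av l = (if l = 1 then ket 0 else if l = 2 then ket 1 + ket 2 else if l = 3 then ket 1 - ket 2
     else if l = 4 then ket 0 else if l = 5 then ket 0 else if l = 6 then ket 1 else ket 2)"

definition bv :: "nat \<Rightarrow> complex^3" where
  "bv l = (if l = 1 then ket 0 else if l = 2 then ket 0 else if l = 3 then ket 0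
     else if l = 4 then ket 1 + ket 2 else if l = 5 then ket 1 - ket 2 else if l = 6 then ket 1 else ket 2)"

lemma psi7_eq: "l \<in> {1..7} \<Longrightarrow> psi7 l = tensor_vec (av l) (bv l)"
  unfolding psi7_def av_def bv_def by auto

lemma povm_QA: "povm 3 QA"
  unfolding povm_def ball13 sum13 QA_def using P_psd sumA by simp

lemma povm_RA: "j \<in> {1..3} \<Longrightarrow> povm 7 (RA j)"
  unfolding povm_def ball17 sum17 RA_def using P_psd sumA sumB psd_zero
  by (auto simp: add.commute add.left_commute)

lemma condA: "\<forall>j\<in>{1..3}. \<forall>k\<in>{1..7}. \<forall>l\<in>{1..7}. k \<noteq> l \<longrightarrow>
            expect (psi7 l) (tensor_mat (QA j) (RA j k)) = 0"
  apply (simp only: ball13 ball17)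
  apply (simp add: psi7_def expect_tensor QA_def RA_def av_def bv_def P0_def Pp_def Pm_def P1_def P2_def expect_projc sum3 neq3)
  done


definition RB :: "nat \<Rightarrow> nat \<Rightarrow> complex^3^3" where
  "RB j k = (if j = 1 then (if k = 1 then P0 else if k = 2 then Pp else if k = 3 then Pm else 0)
     else if j = 2 then (if k = 4 then P0 else if k = 6 then P1 else if k = 7 then P2 else 0)
     else (if k = 5 then P0 else if k = 6 then P1 else if k = 7 then P2 else 0))"

lemma povm_RB: "j \<in> {1..3} \<Longrightarrow> povm 7 (RB j)"
  unfolding povm_def ball17 sum17 RB_def using P_psd sumA sumB psd_zero
  by (auto simp: add.commute add.left_commute)

lemma condB: "\<forall>j\<in>{1..3}. \<forall>k\<in>{1..7}. \<forall>l\<in>{1..7}. k \<noteq> l \<longrightarrow>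
            expect (psi7 l) (tensor_mat (RB j k) (QA j)) = 0"
  apply (simp only: ball13 ball17)
  apply (simp add: psi7_def expect_tensor QA_def RB_def P0_def Pp_def Pm_def P1_def P2_def expect_projc sum3 neq3)
  done

lemma partA: "oneway_A_first psi7 7"
  unfolding oneway_A_first_def using povm_QA povm_RA condA by blast

lemma partB: "oneway_B_first psi7 7"
  unfolding oneway_B_first_def using povm_QA povm_RB condB by blast

lemma key_psd:
  fixes M :: "complex^3^3"
  assumes "psd M" "expect (ket 1 + ket 2) M = 0" "expect (ket 1 - ket 2) M \<noteq> 0"
  shows "expect (ket 1) M \<noteq> 0 \<and> expect (ket 2) M \<noteq> 0"
proof -
  define m11 where "m11 = M$1$1"
  define m22 where "m22 = M$2$2"
  define s where "s = M$1$2 + M$2$1"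
  have e1: "expect (ket 1) M = m11" unfolding expect_def m11_def by (simp add: sum3 neq3)
  have e2: "expect (ket 2) M = m22" unfolding expect_def m22_def by (simp add: sum3 neq3)
  have ep: "expect (ket 1 + ket 2) M = m11 + s + m22" unfolding expect_def m11_def m22_def s_def
    by (simp add: sum3 neq3 algebra_simps)
  have em: "expect (ket 1 - ket 2) M = m11 - s + m22" unfolding expect_def m11_def m22_def s_def
    by (simp add: sum3 neq3 algebra_simps)
  define z :: "real \<Rightarrow> complex^3" where "z t = (\<chi> i. if i = 1 then of_real (t+1) else if i = 2 then of_real t else 0)" for t
  have ez: "expect (z t) M = of_real ((t+1)^2) * m11 + of_real ((t+1)*t) * s + of_real (t^2) * m22" for t
    unfolding expect_def m11_def m22_def s_def z_def
    by (simp add: sum3 neq3 algebra_simps power2_eq_square)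
  have h0: "m11 + s + m22 = 0" using assms(2) ep by simp
  have ez2: "expect (z t) M = of_real t * (2 * m11 + s) + m11" for t
  proof -
    have "expect (z t) M - (of_real t * (2 * m11 + s) + m11) = of_real (t^2) * (m11 + s + m22)"
      unfolding ez by (simp add: algebra_simps power2_eq_square)
    then show ?thesis using h0 by simp
  qed
  define c where "c = 2 * m11 + s"
  have psdz: "Im (of_real t * c + m11) = 0 \<and> Re (of_real t * c + m11) \<ge> 0" for t
    using assms(1) ez2[of t] unfolding psd_def c_def by metis
  have "Im m11 = 0" using psdz[of 0] by simp
  moreover have "Im c + Im m11 = 0" using psdz[of 1] by simp
  ultimately have imc: "Im c = 0" by simp
  have rec: "Re c = 0"
  proof (rule ccontr)
    assume ne: "Re c \<noteq> 0"
    define t where "t = - (Re m11 + 1) / Re c"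
    have "t * Re c + Re m11 \<ge> 0" using psdz[of t] by simp
    moreover have "t * Re c = - (Re m11 + 1)" unfolding t_def using ne by simp
    ultimately show False by simp
  qed
  have c0: "c = 0" using imc rec complex_eq_iff by auto
  have "s = - 2 * m11" using c0 unfolding c_def by (simp add: algebra_simps eq_neg_iff_add_eq_0)
  moreover have "m22 = - m11 - s" using h0 by (simp add: algebra_simps eq_neg_iff_add_eq_0)
  ultimately have "m22 = m11" "expect (ket 1 - ket 2) M = 4 * m11" using em by simp_all
  then show ?thesis using assms(3) e1 e2 by auto
qed


lemma exists_nonzero:
  assumes "povm p A" "expect x (mat 1) \<noteq> 0"
  shows "\<exists>a\<in>{1..p}. expect x (A a) \<noteq> 0"
proof (rule ccontr)
  assume "\<not> ?thesis"
  then have "(\<Sum>a=1..p. expect x (A a)) = 0" by simp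
  moreover have "(\<Sum>a=1..p. expect x (A a)) = expect x (mat 1)"
    using assms(1) unfolding povm_def by (metis expect_sum finite_atLeastAtMost)
  ultimately show False using assms(2) by simp
qed

lemma id0: "expect (ket 0) (mat 1) \<noteq> 0"
  unfolding expect_id by (simp add: sum3 neq3)

lemma idm: "expect (ket 1 - ket 2) (mat 1) \<noteq> 0"
  unfolding expect_id by (simp add: sum3 neq3)

lemma two_nonzero:
  assumes "finite S" "card S \<le> 1" "k \<in> S" "l \<in> S" shows "k = l"
proof (rule ccontr)
  assume "k \<noteq> l"
  then have "card {k, l} = 2" by simp
  moreover have "card {k, l} \<le> card S" using assms by (intro card_mono) auto
  ultimately show False using assms(2) by simp
qed

lemma partC: "\<not> product_distinguishable psi7 7"
proof
  assume "product_distinguishable psi7 7"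
  then obtain p q A B where pA: "povm p (A :: nat \<Rightarrow> complex^3^3)" and pB: "povm q (B :: nat \<Rightarrow> complex^3^3)"
    and H: "\<forall>a\<in>{1..p}. \<forall>b\<in>{1..q}.
           card {k\<in>{1..7}. expect (psi7 k) (tensor_mat (A a) (B b)) \<noteq> 0} \<le> 1"
    unfolding product_distinguishable_def by blast
  have excl: "False" if "a \<in> {1..p}" "b \<in> {1..q}" "k \<in> {1..7}" "l \<in> {1..7}" "k \<noteq> l"
     "expect (psi7 k) (tensor_mat (A a) (B b)) \<noteq> 0" "expect (psi7 l) (tensor_mat (A a) (B b)) \<noteq> 0"
     for a b k l
    using two_nonzero[OF _ H[rule_format, OF that(1,2)], of k l] that by auto
  have ps: "psi7 2 = tensor_vec (ket 1 + ket 2) (ket 0)" "psi7 3 = tensor_vec (ket 1 - ket 2) (ket 0)"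
    "psi7 4 = tensor_vec (ket 0) (ket 1 + ket 2)" "psi7 5 = tensor_vec (ket 0) (ket 1 - ket 2)"
    "psi7 6 = tensor_vec (ket 1) (ket 1)" "psi7 7 = tensor_vec (ket 2) (ket 2)"
    unfolding psi7_def by simp_all
  obtain a0 where a0: "a0 \<in> {1..p}" "expect (ket 0) (A a0) \<noteq> 0" using exists_nonzero[OF pA id0] by blast
  obtain b0 where b0: "b0 \<in> {1..q}" "expect (ket 0) (B b0) \<noteq> 0" using exists_nonzero[OF pB id0] by blast
  obtain a1 where a1: "a1 \<in> {1..p}" "expect (ket 1 - ket 2) (A a1) \<noteq> 0" using exists_nonzero[OF pA idm] by blast
  obtain b1 where b1: "b1 \<in> {1..q}" "expect (ket 1 - ket 2) (B b1) \<noteq> 0" using exists_nonzero[OF pB idm] by blast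
  have "expect (ket 1 + ket 2) (A a1) = 0"
  proof (rule ccontr)
    assume "expect (ket 1 + ket 2) (A a1) \<noteq> 0"
    then show False using excl[OF a1(1) b0(1), of 2 3] a1 b0 by (simp add: ps expect_tensor)
  qed
  with a1 pA have kA: "expect (ket 1) (A a1) \<noteq> 0 \<and> expect (ket 2) (A a1) \<noteq> 0"
    using key_psd unfolding povm_def by blast
  have "expect (ket 1 + ket 2) (B b1) = 0"
  proof (rule ccontr)
    assume "expect (ket 1 + ket 2) (B b1) \<noteq> 0"
    then show False using excl[OF a0(1) b1(1), of 4 5] a0 b1 by (simp add: ps expect_tensor)
  qed
  with b1 pB have kB: "expect (ket 1) (B b1) \<noteq> 0 \<and> expect (ket 2) (B b1) \<noteq> 0"
    using key_psd unfolding povm_def by blast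
  show False using excl[OF a1(1) b1(1), of 6 7] kA kB by (simp add: ps expect_tensor)
qed

theorem mainTheorem5:
  shows "oneway_A_first psi7 7 \<and> oneway_B_first psi7 7 \<and> \<not> product_distinguishable psi7 7"
  using partA partB partC by blast

end
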